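(* Let $\{P_v\}_{v\in\mathcal{V}}$ be a family of distributions indexed by $\mathcal{V}=\{0,1\}^\infty$, let $\alpha\in[0,1)$, and let $\hat V$ be an $(\alpha,\{n_k\})$-test sequence for this family. Then for all $v\in\mathcal{V}$, $$\sum_{k=1}^\infty\mathsf{CondErr}(\hat V,v,k)\le\frac{\alpha}{1-\alpha}.$$
   Context: $\mathbb{P}_v$ denotes the probability under which $X_1,X_2,\dots$ are i.i.d. $P_v$. A sequence of $\{0,1\}$-valued tests $\{\hat V_k\}$, $\hat V_k$ a function of $X_{1:n_k}$, is an $(\alpha,\{n_k\})$-test if for all $v\in\mathcal{V}$, $\mathbb{P}_v(\hat V_k(X_{1:n_k})=v_k\text{ for all }k\in\mathbb{N})\ge1-\alpha$. $\mathsf{CondErr}(\hat V,v,k):=\mathbb{P}_v(\hat V_k\ne v_k\mid\hat V_{1:k-1}=v_{1:k-1})$, where $v_{1:k-1}=(v_1,\dots,v_{k-1})$. *)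

theory Defs
  imports "HOL-Probability.Probability"
begin

text \<open>Sample space: infinite sequences X_0, X_1, ... (0-indexed) of observations in the
  measurable space underlying the distributions.\<close>

definition iidP :: "('v \<Rightarrow> 'a measure) \<Rightarrow> 'v \<Rightarrow> (nat \<Rightarrow> 'a) measure" where
  "iidP P v = (\<Pi>\<^sub>M i\<in>(UNIV::nat set). P v)"

text \<open>The k-th test evaluated on the first n k observations X_{1:n_k}
  (represented as the restriction of the sample to indices below n k).\<close>

definition test_out :: "(nat \<Rightarrow> (nat \<Rightarrow> 'a) \<Rightarrow> bool) \<Rightarrow> (nat \<Rightarrow> nat) \<Rightarrow> nat \<Rightarrow> (nat \<Rightarrow> 'a) \<Rightarrow> bool" where
  "test_out T n k \<omega> = T k (restrict \<omega> {..<n k})"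

definition is_alpha_test ::
  "((nat \<Rightarrow> bool) \<Rightarrow> 'a measure) \<Rightarrow> real \<Rightarrow> (nat \<Rightarrow> nat) \<Rightarrow> (nat \<Rightarrow> (nat \<Rightarrow> 'a) \<Rightarrow> bool) \<Rightarrow> bool" where
  "is_alpha_test P \<alpha> n T \<longleftrightarrow>
     (\<forall>v. measure (iidP P v) {\<omega> \<in> space (iidP P v). \<forall>k. test_out T n k \<omega> = v k} \<ge> 1 - \<alpha>)"

definition CondErr ::
  "((nat \<Rightarrow> bool) \<Rightarrow> 'a measure) \<Rightarrow> (nat \<Rightarrow> nat) \<Rightarrow> (nat \<Rightarrow> (nat \<Rightarrow> 'a) \<Rightarrow> bool) \<Rightarrow> (nat \<Rightarrow> bool) \<Rightarrow> nat \<Rightarrow> real" where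
  "CondErr P n T v k =
     measure (iidP P v) {\<omega> \<in> space (iidP P v). (\<forall>j<k. test_out T n j \<omega> = v j) \<and> test_out T n k \<omega> \<noteq> v k}
     / measure (iidP P v) {\<omega> \<in> space (iidP P v). \<forall>j<k. test_out T n j \<omega> = v j}"

end

theory Submission
  imports Defs
begin

theorem lemma6:
  fixes P :: "(nat \<Rightarrow> bool) \<Rightarrow> 'a measure"
    and M :: "'a measure"
    and \<alpha> :: real
    and n :: "nat \<Rightarrow> nat"
    and T :: "nat \<Rightarrow> (nat \<Rightarrow> 'a) \<Rightarrow> bool"
    and v :: "nat \<Rightarrow> bool"
  assumes prob: "\<And>w. prob_space (P w)"
    and sets_P: "\<And>w. sets (P w) = sets M"
    and meas_T: "\<And>k. T k \<in> measurable (\<Pi>\<^sub>M i\<in>{..<n k}. M) (count_space UNIV)"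
    and alpha: "0 \<le> \<alpha>" "\<alpha> < 1"
    and test: "is_alpha_test P \<alpha> n T"
  shows "summable (\<lambda>k. CondErr P n T v k) \<and> (\<Sum>k. CondErr P n T v k) \<le> \<alpha> / (1 - \<alpha>)"
proof -
  define Q where "Q = iidP P v"
  interpret Q: prob_space Q unfolding Q_def iidP_def by (rule prob_space_PiM) (rule prob)
  have mt: "test_out T n k \<in> measurable Q (count_space UNIV)" for k
  proof -
    have "(\<lambda>f. restrict f {..<n k}) \<in> measurable (\<Pi>\<^sub>M i\<in>(UNIV::nat set). P v) (\<Pi>\<^sub>M i\<in>{..<n k}. P v)"
      by (rule measurable_restrict_subset) simp
    also have "\<dots> = measurable Q (\<Pi>\<^sub>M i\<in>{..<n k}. M)" unfolding Q_def iidP_def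
      by (rule measurable_cong_sets) (auto intro!: sets_PiM_cong simp: sets_P)
    finally have r: "(\<lambda>f. restrict f {..<n k}) \<in> measurable Q (\<Pi>\<^sub>M i\<in>{..<n k}. M)" .
    show ?thesis unfolding test_out_def[abs_def]
      using measurable_comp[OF r meas_T] by (simp add: comp_def)
  qed
  define E where "E k = {\<omega> \<in> space Q. test_out T n k \<omega> = v k}" for k
  have E_sets: "E k \<in> sets Q" for k
  proof -
    have "E k = test_out T n k -` {v k} \<inter> space Q" unfolding E_def by auto
    thus ?thesis using measurable_sets[OF mt, of "{v k}"] by simp
  qed
  define A where "A k = {\<omega> \<in> space Q. \<forall>j<k. test_out T n j \<omega> = v j}" for k
  have A_eq: "A k = space Q \<inter> (\<Inter>j<k. E j)" for k unfolding A_def E_def by auto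
  have A_sets: "A k \<in> sets Q" for k unfolding A_eq using E_sets by auto
  have A_Suc: "A (Suc k) = A k \<inter> E k" for k unfolding A_def E_def using less_Suc_eq by auto
  define Ainf where "Ainf = {\<omega> \<in> space Q. \<forall>k. test_out T n k \<omega> = v k}"
  have Ainf_eq: "Ainf = space Q \<inter> (\<Inter>j. E j)" unfolding Ainf_def E_def by auto
  have Ainf_sets: "Ainf \<in> sets Q" unfolding Ainf_eq using E_sets by auto
  have Ainf_ge: "Q.prob Ainf \<ge> 1 - \<alpha>" using test unfolding is_alpha_test_def Ainf_def Q_def by blast
  define p where "p k = Q.prob (A k)" for k
  have p_ge: "p k \<ge> 1 - \<alpha>" for k
  proof -
    have "Ainf \<subseteq> A k" unfolding Ainf_def A_def by auto
    hence "Q.prob Ainf \<le> p k" unfolding p_def using A_sets by (intro Q.finite_measure_mono) auto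
    thus ?thesis using Ainf_ge by simp
  qed
  have p_le1: "p k \<le> 1" for k unfolding p_def by simp
  have p_mono: "p (Suc k) \<le> p k" for k unfolding p_def A_Suc
    using A_sets by (intro Q.finite_measure_mono) auto
  have CE: "CondErr P n T v k = (p k - p (Suc k)) / p k" for k
  proof -
    have "{\<omega> \<in> space Q. (\<forall>j<k. test_out T n j \<omega> = v j) \<and> test_out T n k \<omega> \<noteq> v k} = A k - A (Suc k)"
      unfolding A_Suc unfolding A_def E_def by auto
    moreover have "Q.prob (A k - A (Suc k)) = p k - p (Suc k)" unfolding p_def
      using A_sets E_sets A_Suc by (intro Q.finite_measure_Diff) auto
    ultimately show ?thesis unfolding CondErr_def Q_def[symmetric] p_def[symmetric] A_def[symmetric]
      by simp
  qed
  have pos: "1 - \<alpha> > 0" using alpha by simp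
  have nn: "0 \<le> CondErr P n T v k" for k unfolding CE using p_mono[of k] p_ge[of k] pos by simp
  have bnd: "CondErr P n T v k \<le> (p k - p (Suc k)) / (1 - \<alpha>)" for k
    unfolding CE using p_mono[of k] p_ge[of k] pos
    by (intro divide_left_mono) (auto intro: mult_pos_pos)
  have ps: "(\<Sum>k<N. CondErr P n T v k) \<le> \<alpha> / (1 - \<alpha>)" for N
  proof -
    have "(\<Sum>k<N. CondErr P n T v k) \<le> (\<Sum>k<N. (p k - p (Suc k)) / (1 - \<alpha>))"
      by (intro sum_mono bnd)
    also have "\<dots> = (p 0 - p N) / (1 - \<alpha>)"
      by (simp add: sum_divide_distrib[symmetric] sum_lessThan_telescope')
    also have "\<dots> \<le> \<alpha> / (1 - \<alpha>)" using p_le1[of 0] p_ge[of N] pos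
      by (intro divide_right_mono) auto
    finally show ?thesis .
  qed
  have sm: "summable (\<lambda>k. CondErr P n T v k)" by (rule summableI_nonneg_bounded[OF nn ps])
  show ?thesis using sm suminf_le_const[OF sm ps] by simp
qed

end
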